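(* Let $\mathcal C$ be a Markov category with conditionals, let $p\colon I\to X$ be a state, and let $E$ be an object. The assignment $(m,k)\mapsto (k\otimes\mathrm{id}_E)\circ\mathrm{copy}_E\circ m$ induces a bijection between (a) pairs $(m,[k])$ where $m\colon I\to E$ is a state and $[k]$ is an equivalence class of morphisms $k\colon E\to X$ modulo $m$-almost sure equality such that $k\circ m=p$ for each $k\in[k]$; and (b) dilations of $p$ with environment $E$.
   Context: A Markov category is a symmetric monoidal category $(\mathcal C,\otimes,I)$ with commutative comonoids $\mathrm{copy}_X\colon X\to X\otimes X$, $\mathrm{del}_X\colon X\to I$ compatible with $\otimes$, with $I$ terminal; a state is a morphism out of $I$. A dilation of $p\colon A\to X$ with environment $E$ is $\pi\colon A\to X\otimes E$ with $(\mathrm{id}_X\otimes\mathrm{del}_E)\circ\pi=p$. For $m\colon\Theta\to E$ and $k,k'\colon E\to X$, $k$ and $k'$ are $m$-almost surely equal if $(\mathrm{id}_E\otimes k)\circ\mathrm{copy}_E\circ m=(\mathrm{id}_E\otimes k')\circ\mathrm{copy}_E\circ m$. For $f\colon A\to X\otimes Y$ with $f_X=(\mathrm{id}_X\otimes\mathrm{del}_Y)\circ f$, a conditional of $f$ given $X$ is $f_{|X}\colon X\otimes A\to Y$ with $f=(\mathrm{id}_X\otimes f_{|X})\circ(\mathrm{copy}_X\otimes\mathrm{id}_A)\circ(f_X\otimes\mathrm{id}_A)\circ\mathrm{copy}_A$; $\mathcal C$ has conditionals if every such $f$ (for all objects, in either order of the factors via the symmetry) has one. *)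

theory Defs
  imports Main
begin

text \<open>A (small) category with a (non-strict) symmetric monoidal structure and
  copy/delete maps.  Every element of type 'm is a morphism; 'mcmp C g f' is g after f.\<close>

record ('o,'m) mcat =
  Dom :: "'m \<Rightarrow> 'o"
  Cod :: "'m \<Rightarrow> 'o"
  mcmp :: "'m \<Rightarrow> 'm \<Rightarrow> 'm"
  idm :: "'o \<Rightarrow> 'm"
  tno :: "'o \<Rightarrow> 'o \<Rightarrow> 'o"
  tnm :: "'m \<Rightarrow> 'm \<Rightarrow> 'm"
  unit :: "'o"
  asc :: "'o \<Rightarrow> 'o \<Rightarrow> 'o \<Rightarrow> 'm"
  lu :: "'o \<Rightarrow> 'm"
  ru :: "'o \<Rightarrow> 'm"
  sym :: "'o \<Rightarrow> 'o \<Rightarrow> 'm"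
  cpy :: "'o \<Rightarrow> 'm"
  del :: "'o \<Rightarrow> 'm"

definition hom :: "('o,'m) mcat \<Rightarrow> 'o \<Rightarrow> 'o \<Rightarrow> 'm set" where
  "hom C a b = {f. Dom C f = a \<and> Cod C f = b}"

definition is_inverse :: "('o,'m) mcat \<Rightarrow> 'm \<Rightarrow> 'm \<Rightarrow> bool" where
  "is_inverse C f g \<longleftrightarrow> Dom C g = Cod C f \<and> Cod C g = Dom C f \<and>
     mcmp C g f = idm C (Dom C f) \<and> mcmp C f g = idm C (Cod C f)"

definition iso_in :: "('o,'m) mcat \<Rightarrow> 'm \<Rightarrow> bool" where
  "iso_in C f \<longleftrightarrow> (\<exists>g. is_inverse C f g)"

definition inv_in :: "('o,'m) mcat \<Rightarrow> 'm \<Rightarrow> 'm" where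
  "inv_in C f = (SOME g. is_inverse C f g)"

locale markov_category =
  fixes C :: "('o,'m) mcat"
  assumes
    dom_id: "Dom C (idm C a) = a" and
    cod_id: "Cod C (idm C a) = a" and
    dom_cmp: "Dom C g = Cod C f \<Longrightarrow> Dom C (mcmp C g f) = Dom C f" and
    cod_cmp: "Dom C g = Cod C f \<Longrightarrow> Cod C (mcmp C g f) = Cod C g" and
    cmp_id_right: "mcmp C f (idm C (Dom C f)) = f" and
    cmp_id_left: "mcmp C (idm C (Cod C f)) f = f" and
    cmp_assoc: "\<lbrakk>Dom C h = Cod C g; Dom C g = Cod C f\<rbrakk> \<Longrightarrow>
        mcmp C h (mcmp C g f) = mcmp C (mcmp C h g) f" and
    dom_tnm: "Dom C (tnm C f g) = tno C (Dom C f) (Dom C g)" and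
    cod_tnm: "Cod C (tnm C f g) = tno C (Cod C f) (Cod C g)" and
    tnm_id: "tnm C (idm C a) (idm C b) = idm C (tno C a b)" and
    tnm_cmp: "\<lbrakk>Dom C g = Cod C f; Dom C g' = Cod C f'\<rbrakk> \<Longrightarrow>
        tnm C (mcmp C g f) (mcmp C g' f') = mcmp C (tnm C g g') (tnm C f f')" and
    asc_hom: "asc C a b c \<in> hom C (tno C (tno C a b) c) (tno C a (tno C b c))" and
    asc_iso: "iso_in C (asc C a b c)" and
    asc_nat: "mcmp C (asc C (Cod C f) (Cod C g) (Cod C h)) (tnm C (tnm C f g) h)
        = mcmp C (tnm C f (tnm C g h)) (asc C (Dom C f) (Dom C g) (Dom C h))" and
    lu_hom: "lu C a \<in> hom C (tno C (unit C) a) a" and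
    lu_iso: "iso_in C (lu C a)" and
    lu_nat: "mcmp C f (lu C (Dom C f)) = mcmp C (lu C (Cod C f)) (tnm C (idm C (unit C)) f)" and
    ru_hom: "ru C a \<in> hom C (tno C a (unit C)) a" and
    ru_iso: "iso_in C (ru C a)" and
    ru_nat: "mcmp C f (ru C (Dom C f)) = mcmp C (ru C (Cod C f)) (tnm C f (idm C (unit C)))" and
    sym_hom: "sym C a b \<in> hom C (tno C a b) (tno C b a)" and
    sym_invol: "mcmp C (sym C b a) (sym C a b) = idm C (tno C a b)" and
    sym_nat: "mcmp C (sym C (Cod C f) (Cod C g)) (tnm C f g)
        = mcmp C (tnm C g f) (sym C (Dom C f) (Dom C g))" and
    pentagon: "mcmp C (asc C a b (tno C c d)) (asc C (tno C a b) c d)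
        = mcmp C (tnm C (idm C a) (asc C b c d))
            (mcmp C (asc C a (tno C b c) d) (tnm C (asc C a b c) (idm C d)))" and
    triangle: "mcmp C (tnm C (idm C a) (lu C b)) (asc C a (unit C) b)
        = tnm C (ru C a) (idm C b)" and
    hexagon: "mcmp C (asc C b c a) (mcmp C (sym C a (tno C b c)) (asc C a b c))
        = mcmp C (tnm C (idm C b) (sym C a c))
            (mcmp C (asc C b a c) (tnm C (sym C a b) (idm C c)))" and
    cpy_hom: "cpy C a \<in> hom C a (tno C a a)" and
    del_hom: "del C a \<in> hom C a (unit C)" and
    counit_left: "mcmp C (lu C a) (mcmp C (tnm C (del C a) (idm C a)) (cpy C a)) = idm C a" and
    counit_right: "mcmp C (ru C a) (mcmp C (tnm C (idm C a) (del C a)) (cpy C a)) = idm C a" and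
    coassoc: "mcmp C (asc C a a a) (mcmp C (tnm C (cpy C a) (idm C a)) (cpy C a))
        = mcmp C (tnm C (idm C a) (cpy C a)) (cpy C a)" and
    cocomm: "mcmp C (sym C a a) (cpy C a) = cpy C a" and
    cpy_tensor: "cpy C (tno C a b) =
        mcmp C (inv_in C (asc C a b (tno C a b)))
         (mcmp C (tnm C (idm C a) (asc C b a b))
          (mcmp C (tnm C (idm C a) (tnm C (sym C a b) (idm C b)))
           (mcmp C (tnm C (idm C a) (inv_in C (asc C a b b)))
            (mcmp C (asc C a a (tno C b b)) (tnm C (cpy C a) (cpy C b))))))" and
    del_tensor: "del C (tno C a b) = mcmp C (lu C (unit C)) (tnm C (del C a) (del C b))" and
    unit_terminal: "f \<in> hom C a (unit C) \<Longrightarrow> f = del C a"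

definition marg1 :: "('o,'m) mcat \<Rightarrow> 'o \<Rightarrow> 'o \<Rightarrow> 'm \<Rightarrow> 'm" where
  "marg1 C X Y f = mcmp C (ru C X) (mcmp C (tnm C (idm C X) (del C Y)) f)"

definition is_conditional :: "('o,'m) mcat \<Rightarrow> 'o \<Rightarrow> 'o \<Rightarrow> 'o \<Rightarrow> 'm \<Rightarrow> 'm \<Rightarrow> bool" where
  "is_conditional C A X Y f c \<longleftrightarrow> c \<in> hom C (tno C X A) Y \<and>
     f = mcmp C (tnm C (idm C X) c)
          (mcmp C (asc C X X A)
           (mcmp C (tnm C (cpy C X) (idm C A))
            (mcmp C (tnm C (marg1 C X Y f) (idm C A)) (cpy C A))))"

definition has_conditionals :: "('o,'m) mcat \<Rightarrow> bool" where
  "has_conditionals C \<longleftrightarrow>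
     (\<forall>A X Y f. f \<in> hom C A (tno C X Y) \<longrightarrow> (\<exists>c. is_conditional C A X Y f c))"

definition as_eq :: "('o,'m) mcat \<Rightarrow> 'o \<Rightarrow> 'm \<Rightarrow> 'm \<Rightarrow> 'm \<Rightarrow> bool" where
  "as_eq C E m k k' \<longleftrightarrow>
     mcmp C (tnm C (idm C E) k) (mcmp C (cpy C E) m) = mcmp C (tnm C (idm C E) k') (mcmp C (cpy C E) m)"

definition as_rel :: "('o,'m) mcat \<Rightarrow> 'o \<Rightarrow> 'o \<Rightarrow> 'm \<Rightarrow> ('m \<times> 'm) set" where
  "as_rel C E X m = {(k, k'). k \<in> hom C E X \<and> k' \<in> hom C E X \<and> as_eq C E m k k'}"

definition state_class_pairs :: "('o,'m) mcat \<Rightarrow> 'o \<Rightarrow> 'm \<Rightarrow> 'o \<Rightarrow> ('m \<times> 'm set) set" where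
  "state_class_pairs C X p E = {(m, K). m \<in> hom C (unit C) E \<and> K \<in> hom C E X // as_rel C E X m
       \<and> (\<forall>k\<in>K. mcmp C k m = p)}"

definition is_dilation :: "('o,'m) mcat \<Rightarrow> 'o \<Rightarrow> 'o \<Rightarrow> 'm \<Rightarrow> 'o \<Rightarrow> 'm \<Rightarrow> bool" where
  "is_dilation C A X p E \<pi> \<longleftrightarrow> \<pi> \<in> hom C A (tno C X E) \<and>
     mcmp C (ru C X) (mcmp C (tnm C (idm C X) (del C E)) \<pi>) = p"

definition dilations :: "('o,'m) mcat \<Rightarrow> 'o \<Rightarrow> 'o \<Rightarrow> 'm \<Rightarrow> 'o \<Rightarrow> 'm set" where
  "dilations C A X p E = {\<pi>. is_dilation C A X p E \<pi>}"

end

theory Submission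
  imports Defs
begin

context markov_category
begin

abbreviation cp (infixr "\<cdot>" 55) where "g \<cdot> f \<equiv> mcmp C g f"
abbreviation tn (infixr "\<otimes>" 60) where "f \<otimes> g \<equiv> tnm C f g"

lemma hom_simps[simp]:
  "Dom C (asc C a b c) = tno C (tno C a b) c" "Cod C (asc C a b c) = tno C a (tno C b c)"
  "Dom C (lu C a) = tno C (unit C) a" "Cod C (lu C a) = a"
  "Dom C (ru C a) = tno C a (unit C)" "Cod C (ru C a) = a"
  "Dom C (sym C a b) = tno C a b" "Cod C (sym C a b) = tno C b a"
  "Dom C (cpy C a) = a" "Cod C (cpy C a) = tno C a a"
  "Dom C (del C a) = a" "Cod C (del C a) = unit C"
  using asc_hom lu_hom ru_hom sym_hom cpy_hom del_hom unfolding hom_def by auto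

declare dom_id[simp] cod_id[simp] dom_tnm[simp] cod_tnm[simp] dom_cmp[simp] cod_cmp[simp]
  tnm_id[simp]

lemma inv_is: "iso_in C f \<Longrightarrow> is_inverse C f (inv_in C f)"
  unfolding iso_in_def inv_in_def by (metis someI_ex)

lemma isos[simp]: "iso_in C (asc C a b c)" "iso_in C (lu C a)" "iso_in C (ru C a)"
  using asc_iso lu_iso ru_iso by auto

lemma inv_dom[simp]: "iso_in C f \<Longrightarrow> Dom C (inv_in C f) = Cod C f"
  and inv_cod[simp]: "iso_in C f \<Longrightarrow> Cod C (inv_in C f) = Dom C f"
  using inv_is unfolding is_inverse_def by auto

lemma id_r[simp]: "Dom C f = a \<Longrightarrow> f \<cdot> idm C a = f"
  using cmp_id_right by auto
lemma id_l[simp]: "Cod C f = a \<Longrightarrow> idm C a \<cdot> f = f"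
  using cmp_id_left by auto

lemma assoc[simp]: "Dom C h = Cod C g \<Longrightarrow> Dom C g = Cod C f \<Longrightarrow> (h \<cdot> g) \<cdot> f = h \<cdot> (g \<cdot> f)"
  using cmp_assoc by auto

lemma inv_l[simp]: "iso_in C f \<Longrightarrow> inv_in C f \<cdot> f = idm C (Dom C f)"
  and inv_r[simp]: "iso_in C f \<Longrightarrow> f \<cdot> inv_in C f = idm C (Cod C f)"
  using inv_is unfolding is_inverse_def by auto

lemma inv_l'[simp]: "iso_in C f \<Longrightarrow> Cod C x = Dom C f \<Longrightarrow> inv_in C f \<cdot> (f \<cdot> x) = x"
  by (metis assoc inv_cod inv_dom inv_l id_l)
lemma inv_r'[simp]: "iso_in C f \<Longrightarrow> Cod C x = Cod C f \<Longrightarrow> f \<cdot> (inv_in C f \<cdot> x) = x"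
  by (metis assoc inv_cod inv_dom inv_r id_l)

lemma tmerge[simp]: "Dom C g = Cod C f \<Longrightarrow> Dom C g' = Cod C f' \<Longrightarrow> (g \<otimes> g') \<cdot> (f \<otimes> f') = (g \<cdot> f) \<otimes> (g' \<cdot> f')"
  using tnm_cmp by auto
lemma tmerge'[simp]: "Dom C g = Cod C f \<Longrightarrow> Dom C g' = Cod C f' \<Longrightarrow> Cod C x = tno C (Dom C f) (Dom C f') \<Longrightarrow>
   (g \<otimes> g') \<cdot> ((f \<otimes> f') \<cdot> x) = ((g \<cdot> f) \<otimes> (g' \<cdot> f')) \<cdot> x"
  by (metis assoc cod_tnm dom_tnm tmerge)

lemma iso_cancel_l: "iso_in C f \<Longrightarrow> Cod C x = Dom C f \<Longrightarrow> Cod C y = Dom C f \<Longrightarrow> f \<cdot> x = f \<cdot> y \<Longrightarrow> x = y"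
  by (metis inv_l')

lemma ru_nat': "Dom C f = a \<Longrightarrow> Cod C f = b \<Longrightarrow> ru C b \<cdot> (f \<otimes> idm C (unit C)) = f \<cdot> ru C a"
  using ru_nat by metis

lemma ru_cancel: "Dom C f = a \<Longrightarrow> Cod C f = b \<Longrightarrow> Dom C g = a \<Longrightarrow> Cod C g = b \<Longrightarrow>
   f \<otimes> idm C (unit C) = g \<otimes> idm C (unit C) \<Longrightarrow> f = g"
proof -
  assume h: "Dom C f = a" "Cod C f = b" "Dom C g = a" "Cod C g = b" "f \<otimes> idm C (unit C) = g \<otimes> idm C (unit C)"
  have "f \<cdot> ru C a = g \<cdot> ru C a" using h ru_nat'[of f a b] ru_nat'[of g a b] by simp
  hence "(f \<cdot> ru C a) \<cdot> inv_in C (ru C a) = (g \<cdot> ru C a) \<cdot> inv_in C (ru C a)" by simp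
  thus "f = g" using h by simp
qed

lemma kelly_gen: "ru C (tno C x y) \<otimes> idm C z = ((idm C x \<otimes> ru C y) \<cdot> asc C x y (unit C)) \<otimes> idm C z"
proof -
  let ?I = "unit C"
  have P: "asc C x y (tno C ?I z) \<cdot> asc C (tno C x y) ?I z
     = (idm C x \<otimes> asc C y ?I z) \<cdot> (asc C x (tno C y ?I) z \<cdot> (asc C x y ?I \<otimes> idm C z))"
    using pentagon[of x y ?I z] by simp
  have N1: "asc C x y z \<cdot> ((idm C x \<otimes> idm C y) \<otimes> lu C z) = (idm C x \<otimes> (idm C y \<otimes> lu C z)) \<cdot> asc C x y (tno C ?I z)"
    using asc_nat[of "idm C x" "idm C y" "lu C z"] by simp
  have N2: "asc C x y z \<cdot> ((idm C x \<otimes> ru C y) \<otimes> idm C z) = (idm C x \<otimes> (ru C y \<otimes> idm C z)) \<cdot> asc C x (tno C y ?I) z"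
    using asc_nat[of "idm C x" "ru C y" "idm C z"] by simp
  have T1: "(idm C (tno C x y) \<otimes> lu C z) \<cdot> asc C (tno C x y) ?I z = ru C (tno C x y) \<otimes> idm C z"
    using triangle[of "tno C x y" z] by simp
  have T2: "(idm C y \<otimes> lu C z) \<cdot> asc C y ?I z = ru C y \<otimes> idm C z"
    using triangle[of y z] by simp
  have L: "(idm C x \<otimes> (idm C y \<otimes> lu C z)) \<cdot> (asc C x y (tno C ?I z) \<cdot> asc C (tno C x y) ?I z)
      = asc C x y z \<cdot> (ru C (tno C x y) \<otimes> idm C z)"
  proof -
    have "(idm C x \<otimes> (idm C y \<otimes> lu C z)) \<cdot> (asc C x y (tno C ?I z) \<cdot> asc C (tno C x y) ?I z)
       = (asc C x y z \<cdot> ((idm C x \<otimes> idm C y) \<otimes> lu C z)) \<cdot> asc C (tno C x y) ?I z"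
      using N1 by simp
    also have "\<dots> = asc C x y z \<cdot> ((idm C (tno C x y) \<otimes> lu C z) \<cdot> asc C (tno C x y) ?I z)" by simp
    also have "\<dots> = asc C x y z \<cdot> (ru C (tno C x y) \<otimes> idm C z)" using T1 by simp
    finally show ?thesis .
  qed
  have R: "(idm C x \<otimes> (idm C y \<otimes> lu C z)) \<cdot> ((idm C x \<otimes> asc C y ?I z) \<cdot> (asc C x (tno C y ?I) z \<cdot> (asc C x y ?I \<otimes> idm C z)))
      = asc C x y z \<cdot> (((idm C x \<otimes> ru C y) \<cdot> asc C x y ?I) \<otimes> idm C z)"
  proof -
    have "(idm C x \<otimes> (idm C y \<otimes> lu C z)) \<cdot> ((idm C x \<otimes> asc C y ?I z) \<cdot> (asc C x (tno C y ?I) z \<cdot> (asc C x y ?I \<otimes> idm C z)))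
       = (idm C x \<otimes> (ru C y \<otimes> idm C z)) \<cdot> (asc C x (tno C y ?I) z \<cdot> (asc C x y ?I \<otimes> idm C z))"
      using T2 by simp
    also have "\<dots> = (asc C x y z \<cdot> ((idm C x \<otimes> ru C y) \<otimes> idm C z)) \<cdot> (asc C x y ?I \<otimes> idm C z)"
      using N2 by simp
    also have "\<dots> = asc C x y z \<cdot> (((idm C x \<otimes> ru C y) \<cdot> asc C x y ?I) \<otimes> idm C z)" by simp
    finally show ?thesis .
  qed
  have "asc C x y z \<cdot> (ru C (tno C x y) \<otimes> idm C z) = asc C x y z \<cdot> (((idm C x \<otimes> ru C y) \<cdot> asc C x y ?I) \<otimes> idm C z)"
    using L R P by simp
  thus ?thesis by (rule iso_cancel_l[rotated 3]) simp_all
qed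

lemma kelly: "ru C (tno C x y) = (idm C x \<otimes> ru C y) \<cdot> asc C x y (unit C)"
  by (rule ru_cancel[OF _ _ _ _ kelly_gen]) simp_all


lemma W: "k \<in> hom C E X \<Longrightarrow> (k \<otimes> idm C E) \<cdot> cpy C E = sym C E X \<cdot> ((idm C E \<otimes> k) \<cdot> cpy C E)"
proof -
  assume k: "k \<in> hom C E X"
  have 1: "sym C E X \<cdot> (idm C E \<otimes> k) = (k \<otimes> idm C E) \<cdot> sym C E E"
    using sym_nat[of "idm C E" k] k unfolding hom_def by simp
  have "sym C E X \<cdot> ((idm C E \<otimes> k) \<cdot> cpy C E) = (sym C E X \<cdot> (idm C E \<otimes> k)) \<cdot> cpy C E"
    using k unfolding hom_def by simp
  also have "\<dots> = ((k \<otimes> idm C E) \<cdot> sym C E E) \<cdot> cpy C E" using 1 by simp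
  also have "\<dots> = (k \<otimes> idm C E) \<cdot> (sym C E E \<cdot> cpy C E)"
    using k unfolding hom_def by simp
  finally show ?thesis using cocomm by simp
qed

lemma margX: "k \<in> hom C E X \<Longrightarrow> m \<in> hom C (unit C) E \<Longrightarrow>
  ru C X \<cdot> ((idm C X \<otimes> del C E) \<cdot> ((k \<otimes> idm C E) \<cdot> (cpy C E \<cdot> m))) = k \<cdot> m"
proof -
  assume k: "k \<in> hom C E X" and m: "m \<in> hom C (unit C) E"
  have "ru C X \<cdot> ((idm C X \<otimes> del C E) \<cdot> ((k \<otimes> idm C E) \<cdot> (cpy C E \<cdot> m)))
      = ru C X \<cdot> ((k \<otimes> idm C (unit C)) \<cdot> ((idm C E \<otimes> del C E) \<cdot> (cpy C E \<cdot> m)))"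
    using k m unfolding hom_def by simp
  also have "\<dots> = (ru C X \<cdot> (k \<otimes> idm C (unit C))) \<cdot> ((idm C E \<otimes> del C E) \<cdot> (cpy C E \<cdot> m))"
    using k m unfolding hom_def by simp
  also have "\<dots> = (k \<cdot> ru C E) \<cdot> ((idm C E \<otimes> del C E) \<cdot> (cpy C E \<cdot> m))"
    using k unfolding hom_def by (simp add: ru_nat')
  also have "\<dots> = k \<cdot> ((ru C E \<cdot> ((idm C E \<otimes> del C E) \<cdot> cpy C E)) \<cdot> m)"
    using k m unfolding hom_def by simp
  also have "\<dots> = k \<cdot> m" using counit_right[of E] m unfolding hom_def by simp
  finally show ?thesis .
qed

lemma margE: "k \<in> hom C E X \<Longrightarrow> m \<in> hom C (unit C) E \<Longrightarrow>
  lu C E \<cdot> ((del C X \<otimes> idm C E) \<cdot> ((k \<otimes> idm C E) \<cdot> (cpy C E \<cdot> m))) = m"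
proof -
  assume k: "k \<in> hom C E X" and m: "m \<in> hom C (unit C) E"
  have d: "del C X \<cdot> k = del C E"
    by (rule unit_terminal) (use k in \<open>simp add: hom_def\<close>)
  have "lu C E \<cdot> ((del C X \<otimes> idm C E) \<cdot> ((k \<otimes> idm C E) \<cdot> (cpy C E \<cdot> m)))
      = lu C E \<cdot> ((del C E \<otimes> idm C E) \<cdot> (cpy C E \<cdot> m))"
    using k m d unfolding hom_def by simp
  also have "\<dots> = (lu C E \<cdot> ((del C E \<otimes> idm C E) \<cdot> cpy C E)) \<cdot> m"
    using m unfolding hom_def by simp
  also have "\<dots> = m" using counit_left[of E] m unfolding hom_def by simp
  finally show ?thesis .
qed

lemma as_marg: "k \<in> hom C E X \<Longrightarrow> m \<in> hom C (unit C) E \<Longrightarrow>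
  lu C X \<cdot> ((del C E \<otimes> idm C X) \<cdot> ((idm C E \<otimes> k) \<cdot> (cpy C E \<cdot> m))) = k \<cdot> m"
proof -
  assume k: "k \<in> hom C E X" and m: "m \<in> hom C (unit C) E"
  have "lu C X \<cdot> ((del C E \<otimes> idm C X) \<cdot> ((idm C E \<otimes> k) \<cdot> (cpy C E \<cdot> m)))
      = lu C X \<cdot> ((idm C (unit C) \<otimes> k) \<cdot> ((del C E \<otimes> idm C E) \<cdot> (cpy C E \<cdot> m)))"
    using k m unfolding hom_def by simp
  also have "\<dots> = (lu C X \<cdot> (idm C (unit C) \<otimes> k)) \<cdot> ((del C E \<otimes> idm C E) \<cdot> (cpy C E \<cdot> m))"
    using k m unfolding hom_def by simp
  also have "\<dots> = (k \<cdot> lu C E) \<cdot> ((del C E \<otimes> idm C E) \<cdot> (cpy C E \<cdot> m))"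
    using k lu_nat[of k] unfolding hom_def by simp
  also have "\<dots> = k \<cdot> ((lu C E \<cdot> ((del C E \<otimes> idm C E) \<cdot> cpy C E)) \<cdot> m)"
    using k m unfolding hom_def by simp
  also have "\<dots> = k \<cdot> m" using counit_left[of E] m unfolding hom_def by simp
  finally show ?thesis .
qed

lemma as_equiv: "equiv (hom C E X) (as_rel C E X m)"
  unfolding equiv_def refl_on_def Relation.sym_def trans_def as_rel_def as_eq_def by auto

lemma cpy_unit: "cpy C (unit C) = inv_in C (ru C (unit C))"
proof -
  have d: "del C (unit C) = idm C (unit C)"
    by (rule unit_terminal[symmetric]) (simp add: hom_def)
  have "ru C (unit C) \<cdot> cpy C (unit C) = idm C (unit C)"
    using counit_right[of "unit C"] d by simp
  hence "inv_in C (ru C (unit C)) \<cdot> (ru C (unit C) \<cdot> cpy C (unit C)) = inv_in C (ru C (unit C))"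
    by simp
  thus ?thesis by simp
qed

lemma ru_inv_nat: "f \<in> hom C a b \<Longrightarrow> (f \<otimes> idm C (unit C)) \<cdot> inv_in C (ru C a) = inv_in C (ru C b) \<cdot> f"
proof -
  assume f: "f \<in> hom C a b"
  have "ru C b \<cdot> ((f \<otimes> idm C (unit C)) \<cdot> inv_in C (ru C a)) = (ru C b \<cdot> (f \<otimes> idm C (unit C))) \<cdot> inv_in C (ru C a)"
    using f unfolding hom_def by simp
  also have "\<dots> = (f \<cdot> ru C a) \<cdot> inv_in C (ru C a)" using f unfolding hom_def by (simp add: ru_nat')
  also have "\<dots> = ru C b \<cdot> (inv_in C (ru C b) \<cdot> f)" using f unfolding hom_def by simp
  finally show ?thesis
    by (rule iso_cancel_l[rotated 3]) (use f in \<open>simp_all add: hom_def\<close>)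
qed

lemma asc_ru_inv: "asc C a b (unit C) \<cdot> inv_in C (ru C (tno C a b)) = idm C a \<otimes> inv_in C (ru C b)"
proof -
  have "(idm C a \<otimes> inv_in C (ru C b)) \<cdot> ru C (tno C a b) = asc C a b (unit C)"
    unfolding kelly by simp
  hence "asc C a b (unit C) \<cdot> inv_in C (ru C (tno C a b))
     = ((idm C a \<otimes> inv_in C (ru C b)) \<cdot> ru C (tno C a b)) \<cdot> inv_in C (ru C (tno C a b))" by simp
  also have "\<dots> = idm C a \<otimes> inv_in C (ru C b)" by simp
  finally show ?thesis .
qed


lemma surj_dil:
  assumes hc: "has_conditionals C" and d: "is_dilation C (unit C) X p E \<pi>"
  shows "\<exists>m k. m \<in> hom C (unit C) E \<and> k \<in> hom C E X \<and> \<pi> = (k \<otimes> idm C E) \<cdot> (cpy C E \<cdot> m)"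
proof -
  let ?I = "unit C"
  have \<pi>: "Dom C \<pi> = ?I" "Cod C \<pi> = tno C X E" using d unfolding is_dilation_def hom_def by auto
  define \<sigma> where "\<sigma> = sym C X E \<cdot> \<pi>"
  have \<sigma>h: "\<sigma> \<in> hom C ?I (tno C E X)" unfolding \<sigma>_def hom_def using \<pi> by simp
  obtain c where c: "is_conditional C ?I E X \<sigma> c" using hc \<sigma>h unfolding has_conditionals_def by blast
  define m where "m = marg1 C E X \<sigma>"
  have mh: "m \<in> hom C ?I E" unfolding m_def marg1_def hom_def using \<sigma>h unfolding hom_def by simp
  have ch: "c \<in> hom C (tno C E ?I) X" using c unfolding is_conditional_def by simp
  have eq: "\<sigma> = (idm C E \<otimes> c) \<cdot> (asc C E E ?I \<cdot> ((cpy C E \<otimes> idm C ?I) \<cdot> ((m \<otimes> idm C ?I) \<cdot> cpy C ?I)))"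
    using c unfolding is_conditional_def m_def by simp
  define k where "k = c \<cdot> inv_in C (ru C E)"
  have kh: "k \<in> hom C E X" using ch unfolding k_def hom_def by simp
  have cm: "cpy C E \<cdot> m \<in> hom C ?I (tno C E E)" using mh unfolding hom_def by simp
  have "(cpy C E \<otimes> idm C ?I) \<cdot> ((m \<otimes> idm C ?I) \<cdot> cpy C ?I) = ((cpy C E \<cdot> m) \<otimes> idm C ?I) \<cdot> inv_in C (ru C ?I)"
    using mh unfolding hom_def cpy_unit by simp
  also have "\<dots> = inv_in C (ru C (tno C E E)) \<cdot> (cpy C E \<cdot> m)"
    using ru_inv_nat[OF cm] .
  finally have e1: "(cpy C E \<otimes> idm C ?I) \<cdot> ((m \<otimes> idm C ?I) \<cdot> cpy C ?I) = inv_in C (ru C (tno C E E)) \<cdot> (cpy C E \<cdot> m)" .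
  have "asc C E E ?I \<cdot> (inv_in C (ru C (tno C E E)) \<cdot> (cpy C E \<cdot> m))
     = (asc C E E ?I \<cdot> inv_in C (ru C (tno C E E))) \<cdot> (cpy C E \<cdot> m)"
    using mh unfolding hom_def by simp
  also have "\<dots> = (idm C E \<otimes> inv_in C (ru C E)) \<cdot> (cpy C E \<cdot> m)" by (simp add: asc_ru_inv)
  finally have e2: "asc C E E ?I \<cdot> (inv_in C (ru C (tno C E E)) \<cdot> (cpy C E \<cdot> m)) = (idm C E \<otimes> inv_in C (ru C E)) \<cdot> (cpy C E \<cdot> m)" .
  have "\<sigma> = (idm C E \<otimes> c) \<cdot> ((idm C E \<otimes> inv_in C (ru C E)) \<cdot> (cpy C E \<cdot> m))"
    using eq e1 e2 by simp
  also have "\<dots> = (idm C E \<otimes> k) \<cdot> (cpy C E \<cdot> m)"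
    using mh ch unfolding hom_def k_def by simp
  finally have e3: "\<sigma> = (idm C E \<otimes> k) \<cdot> (cpy C E \<cdot> m)" .
  have "(k \<otimes> idm C E) \<cdot> (cpy C E \<cdot> m) = ((k \<otimes> idm C E) \<cdot> cpy C E) \<cdot> m"
    using kh mh unfolding hom_def by simp
  also have "\<dots> = (sym C E X \<cdot> ((idm C E \<otimes> k) \<cdot> cpy C E)) \<cdot> m" using W[OF kh] by simp
  also have "\<dots> = sym C E X \<cdot> \<sigma>" using e3 kh mh unfolding hom_def by simp
  also have "\<dots> = (sym C E X \<cdot> sym C X E) \<cdot> \<pi>" unfolding \<sigma>_def using \<pi> by simp
  also have "\<dots> = \<pi>" using sym_invol[of X E] sym_invol[of E X] \<pi> by simp
  finally show ?thesis using mh kh by blast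
qed


lemma iso_sym: "iso_in C (sym C a b)"
  unfolding iso_in_def is_inverse_def
  by (rule exI[of _ "sym C b a"]) (simp add: sym_invol)

lemma GW: "k \<in> hom C E X \<Longrightarrow> m \<in> hom C (unit C) E \<Longrightarrow>
  (k \<otimes> idm C E) \<cdot> (cpy C E \<cdot> m) = sym C E X \<cdot> ((idm C E \<otimes> k) \<cdot> (cpy C E \<cdot> m))"
proof -
  assume kh: "k \<in> hom C E X" and mh: "m \<in> hom C (unit C) E"
  have "(k \<otimes> idm C E) \<cdot> (cpy C E \<cdot> m) = ((k \<otimes> idm C E) \<cdot> cpy C E) \<cdot> m"
    using kh mh unfolding hom_def by simp
  also have "\<dots> = (sym C E X \<cdot> ((idm C E \<otimes> k) \<cdot> cpy C E)) \<cdot> m" using W[OF kh] by simp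
  also have "\<dots> = sym C E X \<cdot> ((idm C E \<otimes> k) \<cdot> (cpy C E \<cdot> m))" using kh mh unfolding hom_def by simp
  finally show ?thesis .
qed

lemma main:
  assumes hc: "has_conditionals C" and p: "p \<in> hom C (unit C) X"
  shows "\<exists>F. (\<forall>m K k. (m, K) \<in> state_class_pairs C X p E \<and> k \<in> K \<longrightarrow>
                 F (m, K) = mcmp C (tnm C k (idm C E)) (mcmp C (cpy C E) m))
           \<and> bij_betw F (state_class_pairs C X p E) (dilations C (unit C) X p E)"
proof -
  let ?S = "state_class_pairs C X p E"
  let ?G = "\<lambda>k m. (k \<otimes> idm C E) \<cdot> (cpy C E \<cdot> m)"
  define F where "F = (\<lambda>(m::'m, K::'m set). ?G (SOME k. k \<in> K) m)"
  have cls: "as_eq C E m k k' \<and> k \<in> hom C E X \<and> k' \<in> hom C E X"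
    if "(m,K) \<in> ?S" "k \<in> K" "k' \<in> K" for m K k k'
  proof -
    have "K \<in> hom C E X // as_rel C E X m" using that unfolding state_class_pairs_def by auto
    hence "(k,k') \<in> as_rel C E X m" using quotient_eq_iff[OF as_equiv, of K E X m K k k'] that by auto
    thus ?thesis unfolding as_rel_def by auto
  qed
  have Geq: "?G k m = ?G k' m" if "m \<in> hom C (unit C) E" "k \<in> hom C E X" "k' \<in> hom C E X" "as_eq C E m k k'"
    for m k k' using that GW[of k E X m] GW[of k' E X m] unfolding as_eq_def by simp
  have wd: "F (m,K) = ?G k m" if "(m,K) \<in> ?S" "k \<in> K" for m K k
  proof -
    have "(SOME k. k \<in> K) \<in> K" using that by (metis someI)
    moreover have mh: "m \<in> hom C (unit C) E" using that unfolding state_class_pairs_def by auto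
    ultimately show ?thesis unfolding F_def using cls[OF that(1) _ that(2)] Geq by auto
  qed
  have ne: "\<exists>k. k \<in> K" if "(m,K) \<in> ?S" for m K
  proof -
    have "K \<in> hom C E X // as_rel C E X m" using that unfolding state_class_pairs_def by auto
    thus ?thesis using in_quotient_imp_non_empty[OF as_equiv] by blast
  qed
  have Gd: "?G k m \<in> dilations C (unit C) X p E" if "(m,K) \<in> ?S" "k \<in> K" for m K k
  proof -
    have mh: "m \<in> hom C (unit C) E" and km: "k \<cdot> m = p" using that unfolding state_class_pairs_def by auto
    have kh: "k \<in> hom C E X" using cls[OF that(1) that(2) that(2)] by auto
    show ?thesis unfolding dilations_def is_dilation_def
      using margX[OF kh mh] km kh mh unfolding hom_def by simp
  qed
  have inj: "inj_on F ?S"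
  proof (rule inj_onI)
    fix a b assume a: "a \<in> ?S" and b: "b \<in> ?S" and eq: "F a = F b"
    obtain m K where a': "a = (m,K)" by force
    obtain m' K' where b': "b = (m',K')" by force
    obtain k where k: "k \<in> K" using ne a a' by blast
    obtain k' where k': "k' \<in> K'" using ne b b' by blast
    have kh: "k \<in> hom C E X" using cls[of m K k k] a a' k by auto
    have kh': "k' \<in> hom C E X" using cls[of m' K' k' k'] b b' k' by auto
    have mh: "m \<in> hom C (unit C) E" using a a' unfolding state_class_pairs_def by auto
    have mh': "m' \<in> hom C (unit C) E" using b b' unfolding state_class_pairs_def by auto
    have G: "?G k m = ?G k' m'" using eq wd[of m K k] wd[of m' K' k'] a a' b b' k k' by auto
    have mm: "m = m'" using margE[OF kh mh] margE[OF kh' mh'] G by simp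
    have "sym C E X \<cdot> ((idm C E \<otimes> k) \<cdot> (cpy C E \<cdot> m)) = sym C E X \<cdot> ((idm C E \<otimes> k') \<cdot> (cpy C E \<cdot> m))"
      using G GW[OF kh mh] GW[OF kh' mh] mm by simp
    hence ae: "as_eq C E m k k'" unfolding as_eq_def
      by (rule iso_cancel_l[rotated 3, where f = "sym C E X"])
         (use kh kh' mh iso_sym in \<open>auto simp: hom_def\<close>)
    have "K = K'"
    proof -
      have "K \<in> hom C E X // as_rel C E X m" using a a' unfolding state_class_pairs_def by auto
      moreover have "K' \<in> hom C E X // as_rel C E X m" using b b' mm unfolding state_class_pairs_def by auto
      ultimately show ?thesis using quotient_eq_iff[OF as_equiv, of K E X m K' k k'] k k' ae kh kh'
        unfolding as_rel_def by auto
    qed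
    thus "a = b" using a' b' mm by simp
  qed
  have img: "F ` ?S = dilations C (unit C) X p E"
  proof
    show "F ` ?S \<subseteq> dilations C (unit C) X p E"
    proof
      fix \<pi> assume "\<pi> \<in> F ` ?S"
      then obtain m K where mK: "(m,K) \<in> ?S" "\<pi> = F (m,K)" by auto
      obtain k where k: "k \<in> K" using ne mK by blast
      show "\<pi> \<in> dilations C (unit C) X p E" using mK wd[OF mK(1) k] Gd[OF mK(1) k] by simp
    qed
  next
    show "dilations C (unit C) X p E \<subseteq> F ` ?S"
    proof
      fix \<pi> assume pd: "\<pi> \<in> dilations C (unit C) X p E"
      then obtain m k where mh: "m \<in> hom C (unit C) E" and kh: "k \<in> hom C E X" and \<pi>: "\<pi> = ?G k m"
        using surj_dil[OF hc] unfolding dilations_def by blast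
      define K where "K = as_rel C E X m `` {k}"
      have kK: "k \<in> K" unfolding K_def as_rel_def as_eq_def using kh by auto
      have km: "k \<cdot> m = p" using pd margX[OF kh mh] \<pi> unfolding dilations_def is_dilation_def by simp
      have "(m,K) \<in> ?S" unfolding state_class_pairs_def
      proof (intro CollectI case_prodI conjI ballI)
        show "m \<in> hom C (unit C) E" by fact
        show "K \<in> hom C E X // as_rel C E X m" unfolding K_def using kh by (rule quotientI)
        fix k' assume "k' \<in> K"
        hence k': "k' \<in> hom C E X" "as_eq C E m k k'" unfolding K_def as_rel_def by auto
        show "k' \<cdot> m = p" using as_marg[OF kh mh] as_marg[OF k'(1) mh] k'(2) km unfolding as_eq_def by simp
      qed
      moreover have "F (m,K) = \<pi>" using wd[OF calculation kK] \<pi> by simp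
      ultimately show "\<pi> \<in> F ` ?S" by force
    qed
  qed
  show ?thesis
    by (rule exI[of _ F]) (use wd inj img in \<open>auto simp: bij_betw_def\<close>)
qed

end

theorem proposition1p13:
  fixes C :: "('o,'m) mcat" and p :: 'm and X E :: 'o
  assumes "markov_category C"
    and "has_conditionals C"
    and "p \<in> hom C (unit C) X"
  shows "\<exists>F. (\<forall>m K k. (m, K) \<in> state_class_pairs C X p E \<and> k \<in> K \<longrightarrow>
                 F (m, K) = mcmp C (tnm C k (idm C E)) (mcmp C (cpy C E) m))
           \<and> bij_betw F (state_class_pairs C X p E) (dilations C (unit C) X p E)"
  using markov_category.main[OF assms] .

end
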